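(* Let $V$ be a module of the intermediate series over $\mathcal{L}[\frac12]$ on which $c$ acts as $0$ and on which $\mathcal{S}=\mathrm{span}\{Y_p,M_n\}$ acts nontrivially, and suppose $V$ has a basis $\{x_k\mid k\in\frac12\mathbb{Z}\}$ and there are $a,b,b'\in\mathbb{C}$ and $f_{p,k},g_{n,k}\in\mathbb{C}$ such that, for all $p\in\frac12+\mathbb{Z}$, $n\in\mathbb{Z}$, $k\in\frac12\mathbb{Z}$: $Y_px_k=f_{p,k}x_{k+p}$, $M_nx_k=g_{n,k}x_{k+n}$, $L_nx_k=(a+k+bn)x_{k+n}$ if $k\in\mathbb{Z}$ and $L_nx_k=(a+k+b'n)x_{k+n}$ if $k\in\frac12+\mathbb{Z}$. Then $b'=b+\frac12$, or $b'=b-\frac12$, or $(b,b')\in\{(0,\frac32),(\frac32,0),(1,-\frac12),(-\frac12,1)\}$.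
   Context: $\mathcal{L}[\frac12]$ is the complex Lie algebra with basis $\{L_m,Y_p,M_n,c\mid m,n\in\mathbb{Z},\ p\in\frac12+\mathbb{Z}\}$ and brackets $[L_m,L_{m'}]=(m'-m)L_{m+m'}+\delta_{m,-m'}\frac{m^3-m}{12}c$, $[L_m,Y_p]=(p-\frac m2)Y_{p+m}$, $[L_m,M_n]=nM_{n+m}$, $[Y_p,Y_{p'}]=(p'-p)M_{p+p'}$, $[Y_p,M_n]=[M_n,M_{n'}]=0$, $c$ central. With $\mathcal{H}=\mathrm{span}\{L_0,M_0,c\}$, a module of the intermediate series is an indecomposable module $V=\bigoplus_{\lambda\in\mathcal{H}^*}V^\lambda$, $V^\lambda=\{v\mid xv=\lambda(x)v\ \forall x\in\mathcal{H}\}$, with $\dim V^\lambda\le1$ for all $\lambda$. *)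

theory Defs
  imports Complex_Main
begin

text \<open>Half-integers k in (1/2)Z are encoded by the doubled integer j = 2k.
  The module V with basis x_k (k in (1/2)Z) is realised as the space of finitely supported
  functions v :: int => complex, v j being the coordinate of v at x_(j/2).
  Y_p (p in 1/2 + Z) is indexed by the odd integer q = 2p; L_n, M_n by n :: int.
  Coefficients: f q j = f_(q/2, j/2) and g n j = g_(n, j/2).\<close>

type_synonym vec = "int \<Rightarrow> complex"

definition Vsp :: "vec set" where
  "Vsp = {v. finite {j. v j \<noteq> 0}}"

definition vzero :: vec where "vzero = (\<lambda>j. 0)"
definition vadd :: "vec \<Rightarrow> vec \<Rightarrow> vec" where "vadd u v = (\<lambda>j. u j + v j)"
definition vsub :: "vec \<Rightarrow> vec \<Rightarrow> vec" where "vsub u v = (\<lambda>j. u j - v j)"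
definition smul :: "complex \<Rightarrow> vec \<Rightarrow> vec" where "smul c v = (\<lambda>j. c * v j)"

definition Lop :: "complex \<Rightarrow> complex \<Rightarrow> complex \<Rightarrow> int \<Rightarrow> vec \<Rightarrow> vec" where
  "Lop a b b' n v = (\<lambda>j. (a + of_int (j - 2*n) / 2 + (if even (j - 2*n) then b else b') * of_int n)
                          * v (j - 2*n))"

definition Yop :: "(int \<Rightarrow> int \<Rightarrow> complex) \<Rightarrow> int \<Rightarrow> vec \<Rightarrow> vec" where
  "Yop f q v = (\<lambda>j. f q (j - q) * v (j - q))"

definition Mop :: "(int \<Rightarrow> int \<Rightarrow> complex) \<Rightarrow> int \<Rightarrow> vec \<Rightarrow> vec" where
  "Mop g n v = (\<lambda>j. g n (j - 2*n) * v (j - 2*n))"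

definition comm :: "(vec \<Rightarrow> vec) \<Rightarrow> (vec \<Rightarrow> vec) \<Rightarrow> vec \<Rightarrow> vec" where
  "comm A B v = vsub (A (B v)) (B (A v))"

definition is_rep :: "(int \<Rightarrow> vec \<Rightarrow> vec) \<Rightarrow> (int \<Rightarrow> vec \<Rightarrow> vec) \<Rightarrow> (int \<Rightarrow> vec \<Rightarrow> vec)
                      \<Rightarrow> (vec \<Rightarrow> vec) \<Rightarrow> bool" where
  "is_rep L Y M C \<longleftrightarrow>
    (\<forall>v\<in>Vsp.
      (\<forall>m m'. comm (L m) (L m') v =
          vadd (smul (of_int (m' - m)) (L (m + m') v))
               (smul (if m = - m' then of_int (m^3 - m) / 12 else 0) (C v))) \<and>
      (\<forall>m q. odd q \<longrightarrow> comm (L m) (Y q) v = smul (of_int q / 2 - of_int m / 2) (Y (q + 2*m) v)) \<and>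
      (\<forall>m n. comm (L m) (M n) v = smul (of_int n) (M (n + m) v)) \<and>
      (\<forall>q q'. odd q \<longrightarrow> odd q' \<longrightarrow>
          comm (Y q) (Y q') v = smul ((of_int q' - of_int q) / 2) (M ((q + q') div 2) v)) \<and>
      (\<forall>q n. odd q \<longrightarrow> comm (Y q) (M n) v = vzero) \<and>
      (\<forall>n n'. comm (M n) (M n') v = vzero) \<and>
      (\<forall>m. comm C (L m) v = vzero) \<and>
      (\<forall>q. odd q \<longrightarrow> comm C (Y q) v = vzero) \<and>
      (\<forall>n. comm C (M n) v = vzero))"

definition is_submodule :: "(int \<Rightarrow> vec \<Rightarrow> vec) \<Rightarrow> (int \<Rightarrow> vec \<Rightarrow> vec) \<Rightarrow> (int \<Rightarrow> vec \<Rightarrow> vec)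
                      \<Rightarrow> (vec \<Rightarrow> vec) \<Rightarrow> vec set \<Rightarrow> bool" where
  "is_submodule L Y M C U \<longleftrightarrow> U \<subseteq> Vsp \<and> vzero \<in> U \<and>
     (\<forall>u\<in>U. \<forall>w\<in>U. vadd u w \<in> U) \<and> (\<forall>c. \<forall>u\<in>U. smul c u \<in> U) \<and>
     (\<forall>u\<in>U. (\<forall>m. L m u \<in> U) \<and> (\<forall>q. odd q \<longrightarrow> Y q u \<in> U) \<and> (\<forall>n. M n u \<in> U) \<and> C u \<in> U)"

definition indecomposable :: "(int \<Rightarrow> vec \<Rightarrow> vec) \<Rightarrow> (int \<Rightarrow> vec \<Rightarrow> vec) \<Rightarrow> (int \<Rightarrow> vec \<Rightarrow> vec)
                      \<Rightarrow> (vec \<Rightarrow> vec) \<Rightarrow> bool" where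
  "indecomposable L Y M C \<longleftrightarrow> Vsp \<noteq> {vzero} \<and>
     (\<forall>U W. is_submodule L Y M C U \<and> is_submodule L Y M C W \<and> U \<inter> W = {vzero} \<and>
            {vadd u w | u w. u \<in> U \<and> w \<in> W} = Vsp \<longrightarrow> U = {vzero} \<or> W = {vzero})"

definition weight_space :: "(int \<Rightarrow> vec \<Rightarrow> vec) \<Rightarrow> (int \<Rightarrow> vec \<Rightarrow> vec) \<Rightarrow> (vec \<Rightarrow> vec)
                     \<Rightarrow> complex \<Rightarrow> complex \<Rightarrow> complex \<Rightarrow> vec set" where
  "weight_space L M C l1 l2 l3 =
     {v \<in> Vsp. L 0 v = smul l1 v \<and> M 0 v = smul l2 v \<and> C v = smul l3 v}"

definition intermediate_series :: "(int \<Rightarrow> vec \<Rightarrow> vec) \<Rightarrow> (int \<Rightarrow> vec \<Rightarrow> vec) \<Rightarrow> (int \<Rightarrow> vec \<Rightarrow> vec)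
                      \<Rightarrow> (vec \<Rightarrow> vec) \<Rightarrow> bool" where
  "intermediate_series L Y M C \<longleftrightarrow>
     is_rep L Y M C \<and> indecomposable L Y M C \<and>
     (\<forall>v\<in>Vsp. \<exists>vs. (\<forall>w\<in>set vs. \<exists>l1 l2 l3. w \<in> weight_space L M C l1 l2 l3) \<and>
                    v = foldr vadd vs vzero) \<and>
     (\<forall>l1 l2 l3. \<forall>u\<in>weight_space L M C l1 l2 l3. \<forall>w\<in>weight_space L M C l1 l2 l3.
         \<exists>\<alpha> \<beta>. (\<alpha> \<noteq> 0 \<or> \<beta> \<noteq> 0) \<and> vadd (smul \<alpha> u) (smul \<beta> w) = vzero)"

end

theory Submission
  imports Defs
begin


lemma sl2: fixes x a b G0 G1 G2 H0 H1 :: complex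
assumes "(x - 1 + 1/2 + b)*G1 - (x - 1 + a)*G0 = 0"
"(x - 2 + 1/2 + b)*G2 - (x - 2 + a)*G1 = 0"
"(x + 1/2 - b)*G0 - (x - a)*G1 = H0"
"(x - 1 + 1/2 - b)*G1 - (x - 1 - a)*G2 = H1"
"(x - 1/2 - b)*H0 - (x - a)*H1 = 0"
shows "G0 * ((a-b-1/2)*(a+b-1/2)*(a-b+1/2)*(a+b-3/2)) = 0"
  using assms by algebra

lemma l2a: fixes x a b Gm1 G0 G1 G2 G3 H0 H1 H2 H3 T0 T1 P :: complex
assumes "(x-1+1/2+b)*Gm1 - (x-1+a)*G0 = 0"
 "(x+1/2+b)*G0 - (x+a)*G1 = 0"
 "(x+1+1/2+b)*G1 - (x+1+a)*G2 = 0"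
 "(x+2+1/2+b)*G2 - (x+2+a)*G3 = 0"
 "(x+1/2-b)*G0 - (x-a)*Gm1 = H0"
 "(x+1+1/2-b)*G1 - (x+1-a)*G0 = H1"
 "(x+2+1/2-b)*G2 - (x+2-a)*G1 = H2"
 "(x+3+1/2-b)*G3 - (x+3-a)*G2 = H3"
 "(x-1/2+2*b)*H0 - (x+2*a)*H2 = -3/2*T0"
 "(x+1-1/2+2*b)*H1 - (x+1+2*a)*H3 = -3/2*T1"
 "(x+1/2+2*b)*G0 - (x+2*a)*G2 = -1/2*P"
 "(x+3/2+b)*T0 - (x+a)*T1 = P"
 "b = 3/2 - a"
shows "G0 * (a*(a-1)*(2*a-1)*(2*a-3)*(x+a+2)) = 0"
  using assms by algebra

lemma l2b: fixes x a b Gm1 G0 G1 G2 G3 H0 H1 H2 H3 T0 T1 P :: complex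
assumes "(x-1+1/2+b)*Gm1 - (x-1+a)*G0 = 0"
 "(x+1/2+b)*G0 - (x+a)*G1 = 0"
 "(x+1+1/2+b)*G1 - (x+1+a)*G2 = 0"
 "(x+2+1/2+b)*G2 - (x+2+a)*G3 = 0"
 "(x+1/2-b)*G0 - (x-a)*Gm1 = H0"
 "(x+1+1/2-b)*G1 - (x+1-a)*G0 = H1"
 "(x+2+1/2-b)*G2 - (x+2-a)*G1 = H2"
 "(x+3+1/2-b)*G3 - (x+3-a)*G2 = H3"
 "(x-1/2+2*b)*H0 - (x+2*a)*H2 = -3/2*T0"
 "(x+1-1/2+2*b)*H1 - (x+1+2*a)*H3 = -3/2*T1"
 "(x+1/2+2*b)*G0 - (x+2*a)*G2 = -1/2*P"
 "(x+3/2+b)*T0 - (x+a)*T1 = P"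
 "b = 1/2 - a"
shows "G0 * (a*(a-1)*(2*a-1)*(2*a+1)*(x-a)) = 0"
  using assms by algebra

lemma core:
  fixes a b c :: complex and \<phi> :: "int \<Rightarrow> int \<Rightarrow> complex"
  assumes E: "\<And>q m t. odd q \<Longrightarrow> (c + of_int t + of_int q/2 + b*of_int m) * \<phi> q t
      - (c + of_int t + a*of_int m) * \<phi> q (t+m) = (of_int q/2 - of_int m/2) * \<phi> (q+2*m) t"
  and nz: "odd q0" "\<phi> q0 t0 \<noteq> 0"
  shows "b = a + 1/2 \<or> b = a - 1/2 \<or> (a,b) \<in> {(0,3/2),(3/2,0),(1,-1/2),(-1/2,1)}"
proof -
  have A: "(c + of_int t + 1/2 + b)*\<phi> 1 t - (c + of_int t + a)*\<phi> 1 (t+1) = 0" for t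
    using E[of 1 t 1] by simp
  have B: "(c + of_int t + 1/2 - b)*\<phi> 1 t - (c + of_int t - a)*\<phi> 1 (t-1) = \<phi> (-1) t" for t
    using E[of 1 t "-1"] by simp
  have D: "(c + of_int t - 1/2 - b)*\<phi> (-1) t - (c + of_int t - a)*\<phi> (-1) (t-1) = 0" for t
    using E[of "-1" t "-1"] by simp
  have T: "(c + of_int t - 1/2 + 2*b)*\<phi> (-1) t - (c + of_int t + 2*a)*\<phi> (-1) (t+2) = -3/2 * \<phi> 3 t" for t
    using E[of "-1" t 2] by (simp add: mult.commute)
  have P: "(c + of_int t + 1/2 + 2*b)*\<phi> 1 t - (c + of_int t + 2*a)*\<phi> 1 (t+2) = -1/2 * \<phi> 5 t" for t
    using E[of 1 t 2] by (simp add: mult.commute)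
  have F: "(c + of_int t + 3/2 + b)*\<phi> 3 t - (c + of_int t + a)*\<phi> 3 (t+1) = \<phi> 5 t" for t
    using E[of 3 t 1] by (simp add: mult.commute)
  have gnz: "\<exists>t. \<phi> 1 t \<noteq> 0"
  proof (rule ccontr)
    assume "\<not> ?thesis"
    hence g0: "\<phi> 1 t = 0" for t by auto
    have h0: "\<phi> (-1) t = 0" for t using B[of t] g0 by simp
    show False
    proof (cases "q0 = 3")
      case True
      then show False using T[of t0] h0 nz by simp
    next
      case False
      obtain m where m: "q0 = 2*m + 1" using nz(1) by (metis odd_two_times_div_two_succ)
      with False have "m \<noteq> 1" by auto
      hence ne: "(of_int 1/2 - of_int m/2 :: complex) \<noteq> 0" by simp
      have "(of_int 1/2 - of_int m/2) * \<phi> (1+2*m) t0 = 0" using E[of 1 t0 m] g0 by simp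
      with ne have "\<phi> (1+2*m) t0 = 0" by simp
      with m nz show False by (simp add: add.commute)
    qed
  qed
  then obtain t1 where t1: "\<phi> 1 t1 \<noteq> 0" by blast

  have L2: "\<phi> 1 t * (a*(a-1)*(2*a-1)*(2*a-3)*(c + of_int t + a + 2)) = 0" if bb: "b = 3/2 - a" for t
  proof -
    let ?x = "c + of_int t"
    have i1: "(?x-1+1/2+b)*\<phi> 1 (t-1) - (?x-1+a)*\<phi> 1 t = 0" using A[of "t-1"] by (simp add: algebra_simps)
    have i3: "(?x+1+1/2+b)*\<phi> 1 (t+1) - (?x+1+a)*\<phi> 1 (t+2) = 0" using A[of "t+1"] by (simp add: algebra_simps)
    have i4: "(?x+2+1/2+b)*\<phi> 1 (t+2) - (?x+2+a)*\<phi> 1 (t+3) = 0" using A[of "t+2"] by (simp add: algebra_simps)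
    have i6: "(?x+1+1/2-b)*\<phi> 1 (t+1) - (?x+1-a)*\<phi> 1 t = \<phi> (-1) (t+1)" using B[of "t+1"] by (simp add: algebra_simps)
    have i7: "(?x+2+1/2-b)*\<phi> 1 (t+2) - (?x+2-a)*\<phi> 1 (t+1) = \<phi> (-1) (t+2)" using B[of "t+2"] by (simp add: algebra_simps)
    have i8: "(?x+3+1/2-b)*\<phi> 1 (t+3) - (?x+3-a)*\<phi> 1 (t+2) = \<phi> (-1) (t+3)" using B[of "t+3"] by (simp add: algebra_simps)
    have i10: "(?x+1-1/2+2*b)*\<phi> (-1) (t+1) - (?x+1+2*a)*\<phi> (-1) (t+3) = -3/2*\<phi> 3 (t+1)" using T[of "t+1"] by (simp add: algebra_simps)
    show ?thesis by (rule l2a[OF i1 A[of t] i3 i4 B[of t] i6 i7 i8 T[of t] i10 P[of t] F[of t] bb])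
  qed
  have L2': "\<phi> 1 t * (a*(a-1)*(2*a-1)*(2*a+1)*(c + of_int t - a)) = 0" if bb: "b = 1/2 - a" for t
  proof -
    let ?x = "c + of_int t"
    have i1: "(?x-1+1/2+b)*\<phi> 1 (t-1) - (?x-1+a)*\<phi> 1 t = 0" using A[of "t-1"] by (simp add: algebra_simps)
    have i3: "(?x+1+1/2+b)*\<phi> 1 (t+1) - (?x+1+a)*\<phi> 1 (t+2) = 0" using A[of "t+1"] by (simp add: algebra_simps)
    have i4: "(?x+2+1/2+b)*\<phi> 1 (t+2) - (?x+2+a)*\<phi> 1 (t+3) = 0" using A[of "t+2"] by (simp add: algebra_simps)
    have i6: "(?x+1+1/2-b)*\<phi> 1 (t+1) - (?x+1-a)*\<phi> 1 t = \<phi> (-1) (t+1)" using B[of "t+1"] by (simp add: algebra_simps)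
    have i7: "(?x+2+1/2-b)*\<phi> 1 (t+2) - (?x+2-a)*\<phi> 1 (t+1) = \<phi> (-1) (t+2)" using B[of "t+2"] by (simp add: algebra_simps)
    have i8: "(?x+3+1/2-b)*\<phi> 1 (t+3) - (?x+3-a)*\<phi> 1 (t+2) = \<phi> (-1) (t+3)" using B[of "t+3"] by (simp add: algebra_simps)
    have i10: "(?x+1-1/2+2*b)*\<phi> (-1) (t+1) - (?x+1+2*a)*\<phi> (-1) (t+3) = -3/2*\<phi> 3 (t+1)" using T[of "t+1"] by (simp add: algebra_simps)
    show ?thesis by (rule l2b[OF i1 A[of t] i3 i4 B[of t] i6 i7 i8 T[of t] i10 P[of t] F[of t] bb])
  qed
  have s1: "(c + of_int t1 - 1 + 1/2 + b)*\<phi> 1 (t1-1) - (c + of_int t1 - 1 + a)*\<phi> 1 t1 = 0"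
    using A[of "t1-1"] by (simp add: algebra_simps)
  have s2: "(c + of_int t1 - 2 + 1/2 + b)*\<phi> 1 (t1-2) - (c + of_int t1 - 2 + a)*\<phi> 1 (t1-1) = 0"
    using A[of "t1-2"] by (simp add: algebra_simps)
  have s4: "(c + of_int t1 - 1 + 1/2 - b)*\<phi> 1 (t1-1) - (c + of_int t1 - 1 - a)*\<phi> 1 (t1-2) = \<phi> (-1) (t1-1)"
    using B[of "t1-1"] by (simp add: algebra_simps)
  have "\<phi> 1 t1 * ((a-b-1/2)*(a+b-1/2)*(a-b+1/2)*(a+b-3/2)) = 0"
    by (rule sl2[OF s1 s2 B[of t1] s4 D[of t1]])
  with t1 have C: "(a-b-1/2)*(a+b-1/2)*(a-b+1/2)*(a+b-3/2) = 0" by simp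
  have pair: "(\<exists>t. \<phi> 1 t \<noteq> 0 \<and> \<phi> 1 (t+1) \<noteq> 0) \<or> b = a - 3/2"
  proof (cases "\<phi> 1 (t1+1) = 0 \<and> \<phi> 1 (t1 - 1) = 0")
    case True
    have e1: "(c + of_int t1 + 1/2 + b) = 0" using A[of t1] True t1 by simp
    have e2: "(c + of_int t1 - 1 + a) = 0" using s1 True t1 by simp
    from e1 e2 have "b = a - 3/2" by algebra
    then show ?thesis by blast
  next
    case False
    then have "\<phi> 1 (t1+1) \<noteq> 0 \<or> \<phi> 1 (t1-1) \<noteq> 0" by simp
    then show ?thesis
    proof
      assume "\<phi> 1 (t1+1) \<noteq> 0" then show ?thesis using t1 by blast
    next
      assume "\<phi> 1 (t1-1) \<noteq> 0" then show ?thesis using t1 by (metis diff_add_cancel)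
    qed
  qed
  have K: "a*(a-1)*(2*a-1)*(2*a-3) = 0" if bb: "b = 3/2 - a" and pr: "\<phi> 1 t \<noteq> 0" "\<phi> 1 (t+1) \<noteq> 0" for t
  proof -
    let ?K = "a*(a-1)*(2*a-1)*(2*a-3)"
    have u0: "?K * (c + of_int t + a + 2) = 0" using L2[OF bb, of t] pr by simp
    have u1: "?K * (c + of_int t + 1 + a + 2) = 0" using L2[OF bb, of "t+1"] pr by (simp add: add.assoc)
    from u0 u1 show ?thesis by algebra
  qed
  have K': "a*(a-1)*(2*a-1)*(2*a+1) = 0" if bb: "b = 1/2 - a" and pr: "\<phi> 1 t \<noteq> 0" "\<phi> 1 (t+1) \<noteq> 0" for t
  proof -
    let ?K = "a*(a-1)*(2*a-1)*(2*a+1)"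
    have u0: "?K * (c + of_int t - a) = 0" using L2'[OF bb, of t] pr by simp
    have u1: "?K * (c + of_int t + 1 - a) = 0" using L2'[OF bb, of "t+1"] pr by (simp add: add.assoc)
    from u0 u1 show ?thesis by algebra
  qed
  from C consider "a-b-1/2 = 0" | "a+b-1/2 = 0" | "a-b+1/2 = 0" | "a+b-3/2 = 0" by auto
  then show ?thesis
  proof cases
    case 1 then have "b = a - 1/2" by algebra
    then show ?thesis by blast
  next
    case 3 then have "b = a + 1/2" by algebra
    then show ?thesis by blast
  next
    case 2 then have bb: "b = 1/2 - a" by algebra
    from pair show ?thesis
    proof
      assume "b = a - 3/2"
      with bb have "a = 1" "b = -1/2" by algebra+
      then show ?thesis by simp
    next
      assume "\<exists>t. \<phi> 1 t \<noteq> 0 \<and> \<phi> 1 (t+1) \<noteq> 0"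
      then obtain t where "\<phi> 1 t \<noteq> 0" "\<phi> 1 (t+1) \<noteq> 0" by blast
      from K'[OF bb this] consider "a = 0" | "a = 1" | "2*a-1 = 0" | "2*a+1 = 0" by auto
      then show ?thesis
      proof cases
        case 1 with bb show ?thesis by simp
      next
        case 2 with bb show ?thesis by simp
      next
        case 3 then have "b = a - 1/2" using bb by algebra
        then show ?thesis by blast
      next
        case 4 then have "a = -1/2" by algebra
        with bb show ?thesis by simp
      qed
    qed
  next
    case 4 then have bb: "b = 3/2 - a" by algebra
    from pair show ?thesis
    proof
      assume "b = a - 3/2"
      with bb have "a = 3/2" "b = 0" by algebra+
      then show ?thesis by simp
    next
      assume "\<exists>t. \<phi> 1 t \<noteq> 0 \<and> \<phi> 1 (t+1) \<noteq> 0"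
      then obtain t where "\<phi> 1 t \<noteq> 0" "\<phi> 1 (t+1) \<noteq> 0" by blast
      from K[OF bb this] consider "a = 0" | "a = 1" | "2*a-1 = 0" | "2*a-3 = 0" by auto
      then show ?thesis
      proof cases
        case 1 with bb show ?thesis by simp
      next
        case 2 with bb show ?thesis by simp
      next
        case 3 then have "b = a + 1/2" using bb by algebra
        then show ?thesis by blast
      next
        case 4 then have "a = 3/2" by algebra
        with bb show ?thesis by simp
      qed
    qed
  qed
qed

definition ee :: "int \<Rightarrow> vec" where "ee i = (\<lambda>j. if j = i then 1 else 0)"

lemma ee_Vsp: "ee i \<in> Vsp"
proof -
  have "{j. ee i j \<noteq> 0} = {i}" by (auto simp: ee_def)
  then show ?thesis by (simp add: Vsp_def)
qed

lemma Ef: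
  assumes R: "is_rep (Lop a b b') (Yop f) (Mop g) C" and q: "odd q"
  shows "(a + of_int (i+q)/2 + (if even (i+q) then b else b')*of_int m) * f q i
       - (a + of_int i/2 + (if even i then b else b')*of_int m) * f q (i+2*m)
       = (of_int q/2 - of_int m/2) * f (q+2*m) i"
proof -
  have "comm (Lop a b b' m) (Yop f q) (ee i) = smul (of_int q / 2 - of_int m / 2) (Yop f (q + 2*m) (ee i))"
    using R q ee_Vsp[of i] unfolding is_rep_def by blast
  then have "comm (Lop a b b' m) (Yop f q) (ee i) (i+q+2*m) = smul (of_int q / 2 - of_int m / 2) (Yop f (q + 2*m) (ee i)) (i+q+2*m)"
    by simp
  then show ?thesis
    by (simp add: comm_def vsub_def smul_def Lop_def Yop_def ee_def algebra_simps)
qed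

theorem lemma3p1:
  fixes a b b' :: complex and f g :: "int \<Rightarrow> int \<Rightarrow> complex"
  assumes "intermediate_series (Lop a b b') (Yop f) (Mop g) (\<lambda>v. vzero)"
    and "(\<exists>q. odd q \<and> (\<exists>v\<in>Vsp. Yop f q v \<noteq> vzero)) \<or> (\<exists>n. \<exists>v\<in>Vsp. Mop g n v \<noteq> vzero)"
  shows "b' = b + 1/2 \<or> b' = b - 1/2 \<or>
         (b, b') \<in> {(0, 3/2), (3/2, 0), (1, -1/2), (-1/2, 1)}"
proof -
  have R: "is_rep (Lop a b b') (Yop f) (Mop g) (\<lambda>v. vzero)"
    using assms(1) unfolding intermediate_series_def by blast
  have fnz: "\<exists>q i. odd q \<and> f q i \<noteq> 0"
  proof (rule ccontr)
    assume "\<not> ?thesis"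
    then have f0: "odd q \<Longrightarrow> f q i = 0" for q i by blast
    have Y0: "odd q \<Longrightarrow> Yop f q v = vzero" for q v
      by (auto simp: Yop_def vzero_def f0)
    from assms(2) show False
    proof
      assume "\<exists>q. odd q \<and> (\<exists>v\<in>Vsp. Yop f q v \<noteq> vzero)"
      then show False using Y0 by blast
    next
      assume "\<exists>n. \<exists>v\<in>Vsp. Mop g n v \<noteq> vzero"
      then obtain n v where "Mop g n v \<noteq> vzero" by blast
      then obtain j where "g n (j - 2*n) * v (j - 2*n) \<noteq> 0"
        by (auto simp: Mop_def vzero_def fun_eq_iff)
      then have gn: "g n (j - 2*n) \<noteq> 0" by simp
      define i where "i = j - 2*n"
      obtain q q' where qq: "odd q" "odd q'" "q \<noteq> q'" "(q + q') div 2 = n"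
      proof (cases "n = 1")
        case True
        show ?thesis by (rule that[of "-1" 3]) (auto simp: True)
      next
        case False
        show ?thesis by (rule that[of 1 "2*n-1"]) (use False in auto)
      qed
      have "comm (Yop f q) (Yop f q') (ee i) = smul ((of_int q' - of_int q) / 2) (Mop g ((q + q') div 2) (ee i))"
        using R qq ee_Vsp[of i] unfolding is_rep_def by blast
      then have "comm (Yop f q) (Yop f q') (ee i) (i + 2*n) = smul ((of_int q' - of_int q) / 2) (Mop g n (ee i)) (i + 2*n)"
        using qq by simp
      then have "(of_int q' - of_int q) / 2 * g n i = (0::complex)"
        using qq by (simp add: comm_def vsub_def smul_def Mop_def ee_def Y0 vzero_def)
      moreover have "(of_int q' - of_int q) / 2 \<noteq> (0::complex)" using qq by simp
      ultimately show False using gn i_def by simp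
    qed
  qed
  then obtain q i where qi: "odd q" "f q i \<noteq> 0" by blast
  show ?thesis
  proof (cases "even i")
    case True
    then obtain t where t: "i = 2*t" by (metis evenE)
    have E: "(a + of_int t + of_int q/2 + b'*of_int m) * f q (2*t)
      - (a + of_int t + b*of_int m) * f q (2*(t+m)) = (of_int q/2 - of_int m/2) * f (q+2*m) (2*t)"
      if "odd q" for q m t
    proof -
      have "\<not> even (2*t+q)" using that by simp
      then show ?thesis using Ef[OF R that, of "2*t" m]
        by (simp add: algebra_simps add_divide_distrib)
    qed
    from core[where a=b and b=b' and c=a and \<phi>="\<lambda>q t. f q (2*t)", OF E] qi t
    have "b' = b + 1/2 \<or> b' = b - 1/2 \<or> (b,b') \<in> {(0,3/2),(3/2,0),(1,-1/2),(-1/2,1)}" by blast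
    then show ?thesis .
  next
    case False
    then obtain t where t: "i = 2*t+1" by (metis oddE)
    have E: "(a + 1/2 + of_int t + of_int q/2 + b*of_int m) * f q (2*t+1)
      - (a + 1/2 + of_int t + b'*of_int m) * f q (2*(t+m)+1) = (of_int q/2 - of_int m/2) * f (q+2*m) (2*t+1)"
      if "odd q" for q m t
    proof -
      have "even (2*t+1+q)" using that by simp
      then show ?thesis using Ef[OF R that, of "2*t+1" m]
        by (simp add: algebra_simps add_divide_distrib)
    qed
    from core[where a=b' and b=b and c="a+1/2" and \<phi>="\<lambda>q t. f q (2*t+1)", OF E] qi t
    have "b = b' + 1/2 \<or> b = b' - 1/2 \<or> (b',b) \<in> {(0,3/2),(3/2,0),(1,-1/2),(-1/2,1)}" by blast
    then show ?thesis by auto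
  qed
qed

end
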